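(* Let $\Xi:M_l\to M_l$ be the pinching map $\Xi((m_{ij}))=(\delta_{ij}m_{ij})$ and let $\Psi:M_N\to M_k$ be any quantum channel, with $K_\Psi=\Psi(D_N)$. Then the image $K_{\Xi\otimes\Psi}=(\Xi\otimes\Psi)(D_{lN})\subset M_l\otimes M_k$ is $$K_{\Xi\otimes\Psi}=\{a_1B_1\oplus\dots\oplus a_lB_l:\ (a_i)\in\Delta_l,\ B_1,\dots,B_l\in K_\Psi\},$$ where $\oplus$ denotes the block-diagonal matrix in $M_l\otimes M_k\cong M_l(M_k)$.
   Context: $\Delta_l$ is the probability simplex $\{(a_1,\dots,a_l):a_i\ge0,\sum a_i=1\}$; $D_d$ is the set of $d\times d$ density matrices. *)

theory Defs
  imports "Jordan_Normal_Form.Matrix" "HOL-Library.Complex_Order"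
begin

text \<open>Tensor products M_a (x) M_b are identified with M_(a*b) via the index
  (i,x) |-> i*b + x (so M_a (x) M_b = M_a(M_b), block matrices).\<close>

definition psd :: "nat \<Rightarrow> complex mat \<Rightarrow> bool" where
  "psd n A \<longleftrightarrow> A \<in> carrier_mat n n \<and>
     (\<forall>v :: nat \<Rightarrow> complex. (\<Sum>i<n. \<Sum>j<n. cnj (v i) * A $$ (i,j) * v j) \<ge> 0)"

definition mtrace :: "complex mat \<Rightarrow> complex" where
  "mtrace A = (\<Sum>i<dim_row A. A $$ (i,i))"

definition density_mats :: "nat \<Rightarrow> complex mat set" where
  "density_mats n = {A. psd n A \<and> mtrace A = 1}"

definition simplex :: "nat \<Rightarrow> (nat \<Rightarrow> real) set" where
  "simplex l = {a. (\<forall>i<l. a i \<ge> 0) \<and> (\<Sum>i<l. a i) = 1}"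

definition munit :: "nat \<Rightarrow> nat \<Rightarrow> nat \<Rightarrow> complex mat" where
  "munit n i j = mat n n (\<lambda>(r,c). if r = i \<and> c = j then 1 else 0)"

definition block :: "nat \<Rightarrow> complex mat \<Rightarrow> nat \<Rightarrow> nat \<Rightarrow> complex mat" where
  "block n X i j = mat n n (\<lambda>(r,c). X $$ (i*n + r, j*n + c))"

text \<open>Tensor product of linear maps Phi : M_m -> M_p and Psi : M_n -> M_q,
  acting on M_m (x) M_n = M_(m*n), with values in M_p (x) M_q = M_(p*q):
  (Phi (x) Psi)(X) = sum_ij Phi(E_ij) (x) Psi(X_ij)  (Kronecker products, written entrywise).\<close>
definition tensor_map :: "nat \<Rightarrow> nat \<Rightarrow> nat \<Rightarrow> nat \<Rightarrow> (complex mat \<Rightarrow> complex mat) \<Rightarrow>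
    (complex mat \<Rightarrow> complex mat) \<Rightarrow> complex mat \<Rightarrow> complex mat" where
  "tensor_map m p n q Phi Psi X = mat (p*q) (p*q) (\<lambda>(r,c).
     \<Sum>i<m. \<Sum>j<m. Phi (munit m i j) $$ (r div q, c div q) * Psi (block n X i j) $$ (r mod q, c mod q))"

definition id_map :: "complex mat \<Rightarrow> complex mat" where
  "id_map X = X"

definition linear_mat_map :: "nat \<Rightarrow> nat \<Rightarrow> (complex mat \<Rightarrow> complex mat) \<Rightarrow> bool" where
  "linear_mat_map n k Psi \<longleftrightarrow>
     (\<forall>X \<in> carrier_mat n n. Psi X \<in> carrier_mat k k) \<and>
     (\<forall>X \<in> carrier_mat n n. \<forall>Y \<in> carrier_mat n n. Psi (X + Y) = Psi X + Psi Y) \<and>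
     (\<forall>X \<in> carrier_mat n n. \<forall>c. Psi (c \<cdot>\<^sub>m X) = c \<cdot>\<^sub>m Psi X)"

definition quantum_channel :: "nat \<Rightarrow> nat \<Rightarrow> (complex mat \<Rightarrow> complex mat) \<Rightarrow> bool" where
  "quantum_channel n k Psi \<longleftrightarrow> linear_mat_map n k Psi \<and>
     (\<forall>m. \<forall>X. psd (m*n) X \<longrightarrow> psd (m*k) (tensor_map m m n k id_map Psi X)) \<and>
     (\<forall>X \<in> carrier_mat n n. mtrace (Psi X) = mtrace X)"

definition pinching :: "nat \<Rightarrow> complex mat \<Rightarrow> complex mat" where
  "pinching l M = mat l l (\<lambda>(i,j). if i = j then M $$ (i,j) else 0)"

definition block_diag :: "nat \<Rightarrow> nat \<Rightarrow> (nat \<Rightarrow> complex mat) \<Rightarrow> complex mat" where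
  "block_diag l k C = mat (l*k) (l*k)
     (\<lambda>(r,c). if r div k = c div k then C (r div k) $$ (r mod k, c mod k) else 0)"

end

theory Submission
  imports Defs
begin

lemma sum_blocks: fixes l :: nat shows "(\<Sum>p<l*N. f p) = (\<Sum>i<l. \<Sum>r<N. (f (i*N+r) :: 'a::comm_monoid_add))"
proof (induction l)
  case 0 then show ?case by simp
next
  case (Suc l)
  have e: "{..<Suc l * N} = {..<l*N} \<union> {l*N..<l*N+N}" by auto
  have s: "(\<Sum>p\<in>{l*N..<l*N+N}. f p) = (\<Sum>r<N. f (l*N+r))"
    by (rule sum.reindex_bij_witness[of _ "\<lambda>r. l*N+r" "\<lambda>p. p - l*N"]) auto
  have "(\<Sum>p<Suc l*N. f p) = (\<Sum>p<l*N. f p) + (\<Sum>p\<in>{l*N..<l*N+N}. f p)"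
    unfolding e by (rule sum.union_disjoint) auto
  then show ?case using Suc s by simp
qed

lemma sum_if_const: "(\<Sum>x\<in>A. if P then f x else 0) = (if P then sum f A else 0)"
  by simp


lemma quad_supp1:
  fixes g :: "nat \<Rightarrow> complex"
  assumes "i < n"
  shows "(\<Sum>q<n. g q * (if q = i then s else 0)) = g i * s"
proof -
  have "(\<Sum>q<n. g q * (if q = i then s else 0)) = (\<Sum>q<n. if q = i then g i * s else 0)"
    by (intro sum.cong refl) auto
  then show ?thesis using assms by simp
qed

lemma quad_supp2:
  fixes g :: "nat \<Rightarrow> complex"
  assumes "i < n" "j < n" "i \<noteq> j"
  shows "(\<Sum>q<n. g q * (if q = i then s else if q = j then t else 0)) = g i * s + g j * t"
proof -
  have "(\<Sum>q<n. g q * (if q = i then s else if q = j then t else 0)) =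
     (\<Sum>q<n. (if q = i then g i * s else 0) + (if q = j then g j * t else 0))"
    by (intro sum.cong refl) (use assms in auto)
  then show ?thesis using assms by (simp add: sum.distrib)
qed

lemma psd_quad: "psd n A \<Longrightarrow> (\<Sum>i<n. \<Sum>j<n. cnj (v i) * A $$ (i,j) * v j) \<ge> 0"
  by (simp add: psd_def)

lemma psd_diag: assumes "psd n A" "i < n" shows "A $$ (i,i) \<ge> 0"
proof -
  let ?v = "\<lambda>p. if p = i then 1 else (0::complex)"
  have "(\<Sum>p<n. \<Sum>q<n. cnj (?v p) * A $$ (p,q) * ?v q) = (\<Sum>p<n. cnj (?v p) * A $$ (p,i) * 1)"
    by (intro sum.cong refl) (rule quad_supp1[OF assms(2)])
  also have "\<dots> = (\<Sum>p<n. A $$ (p,i) * (if p = i then 1 else 0))"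
    by (intro sum.cong refl) auto
  also have "\<dots> = A $$ (i,i)" using quad_supp1[OF assms(2)] by simp
  finally show ?thesis using psd_quad[OF assms(1), of ?v] by simp
qed

lemma psd_offdiag_zero:
  assumes "psd n A" "i < n" "j < n" "A $$ (i,i) = 0" "A $$ (j,j) = 0"
  shows "A $$ (i,j) = 0"
proof (cases "i = j")
  case True then show ?thesis using assms by simp
next
  case False
  have Q: "0 \<le> cnj s * A $$ (i,j) + A $$ (j,i) * s" for s
  proof -
    let ?v = "\<lambda>p. if p = i then s else if p = j then 1 else (0::complex)"
    have "(\<Sum>p<n. \<Sum>q<n. cnj (?v p) * A $$ (p,q) * ?v q) =
        (\<Sum>p<n. cnj (?v p) * A $$ (p,i) * s + cnj (?v p) * A $$ (p,j) * 1)"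
      by (intro sum.cong refl) (rule quad_supp2[OF assms(2,3) False])
    also have "\<dots> = (\<Sum>p<n. (A $$ (p,i) * s) * cnj (?v p) + (A $$ (p,j)) * cnj (?v p))"
      by (intro sum.cong refl) (simp add: algebra_simps)
    also have "\<dots> = (\<Sum>p<n. (A $$ (p,i) * s + A $$ (p,j)) * (if p = i then cnj s else if p = j then 1 else 0))"
      by (intro sum.cong refl) (auto simp: algebra_simps)
    also have "\<dots> = (A $$ (i,i) * s + A $$ (i,j)) * cnj s + (A $$ (j,i) * s + A $$ (j,j)) * 1"
      by (rule quad_supp2[OF assms(2,3) False])
    also have "\<dots> = cnj s * A $$ (i,j) + A $$ (j,i) * s"
      using assms(4,5) by (simp add: algebra_simps)
    finally show ?thesis using psd_quad[OF assms(1), of ?v] by simp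
  qed
  have 1: "0 \<le> A $$ (i,j) + A $$ (j,i)" using Q[of 1] by simp
  have 2: "0 \<le> - (A $$ (i,j) + A $$ (j,i))" using Q[of "-1"] by simp
  have 3: "0 \<le> - \<i> * A $$ (i,j) + \<i> * A $$ (j,i)" using Q[of "\<i>"] by (simp add: algebra_simps)
  have 4: "0 \<le> \<i> * A $$ (i,j) - \<i> * A $$ (j,i)" using Q[of "-\<i>"] by (simp add: algebra_simps)
  have s: "A $$ (i,j) + A $$ (j,i) = 0" using 1 2 by (metis add.inverse_inverse neg_0_le_iff_le order_antisym)
  have d: "\<i> * A $$ (i,j) - \<i> * A $$ (j,i) = 0" using 3 4
    by (metis (no_types, lifting) add.commute diff_conv_add_uminus minus_diff_eq neg_0_le_iff_le order_antisym uminus_add_conv_diff mult_minus_left)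
  from s d show ?thesis by (simp add: algebra_simps)
qed


lemma idx_lt: "i < (l::nat) \<Longrightarrow> r < N \<Longrightarrow> i*N + r < l*N"
proof -
  assume a: "i < l" "r < N"
  have "Suc i * N \<le> l * N" using a(1) by (intro mult_le_mono1) simp
  then show ?thesis using a(2) by simp
qed

lemma psd_block:
  assumes X: "psd (l*N) X" and i: "i < l"
  shows "psd N (block N X i i)"
  unfolding psd_def
proof (intro conjI allI)
  show "block N X i i \<in> carrier_mat N N" by (simp add: block_def)
  fix v :: "nat \<Rightarrow> complex"
  define w where "w p = (if p div N = i then v (p mod N) else 0)" for p
  have wv: "w (j*N+c) = (if j = i then v c else 0)" if "c < N" for j c
    using that by (simp add: w_def)
  have "(\<Sum>p<l*N. \<Sum>q<l*N. cnj (w p) * X $$ (p,q) * w q) =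
     (\<Sum>i'<l. \<Sum>r<N. \<Sum>j'<l. \<Sum>c<N. cnj (w (i'*N+r)) * X $$ (i'*N+r, j'*N+c) * w (j'*N+c))"
    by (simp add: sum_blocks)
  also have "\<dots> = (\<Sum>i'<l. \<Sum>r<N. \<Sum>j'<l. \<Sum>c<N.
       if i' = i then (if j' = i then cnj (v r) * X $$ (i*N+r, i*N+c) * v c else 0) else 0)"
    by (intro sum.cong refl) (auto simp: wv)
  also have "\<dots> = (\<Sum>r<N. \<Sum>c<N. cnj (v r) * X $$ (i*N+r, i*N+c) * v c)"
    using i by (simp add: sum_if_const)
  also have "\<dots> = (\<Sum>r<N. \<Sum>c<N. cnj (v r) * block N X i i $$ (r, c) * v c)"
    by (intro sum.cong refl) (simp add: block_def)
  finally show "0 \<le> (\<Sum>r<N. \<Sum>c<N. cnj (v r) * block N X i i $$ (r, c) * v c)"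
    using psd_quad[OF X, of w] by simp
qed

lemma trace_block: "mtrace (block N X i i) = (\<Sum>r<N. X $$ (i*N+r, i*N+r))"
  by (simp add: mtrace_def block_def)

lemma trace_sum: "X \<in> carrier_mat (l*N) (l*N) \<Longrightarrow> mtrace X = (\<Sum>i<l. mtrace (block N X i i))"
  by (simp only: trace_block) (simp add: mtrace_def sum_blocks)

lemma bd_entry:
  assumes "i < l" "j < l" "r < N" "c < N"
  shows "block_diag l N C $$ (i*N+r, j*N+c) = (if i = j then C i $$ (r,c) else 0)"
  using assms idx_lt[OF assms(1,3)] idx_lt[OF assms(2,4)] by (simp add: block_diag_def)

lemma block_of_bd:
  assumes "i < l" "C i \<in> carrier_mat N N"
  shows "block N (block_diag l N C) i i = C i"
  by (rule eq_matI) (use assms in \<open>auto simp: block_def bd_entry\<close>)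

lemma psd_bd:
  assumes "\<forall>i<l. psd N (C i)"
  shows "psd (l*N) (block_diag l N C)"
  unfolding psd_def
proof (intro conjI allI)
  show "block_diag l N C \<in> carrier_mat (l*N) (l*N)" by (simp add: block_diag_def)
  fix v :: "nat \<Rightarrow> complex"
  have "(\<Sum>p<l*N. \<Sum>q<l*N. cnj (v p) * block_diag l N C $$ (p,q) * v q) =
     (\<Sum>i<l. \<Sum>r<N. \<Sum>j<l. \<Sum>c<N. cnj (v (i*N+r)) * block_diag l N C $$ (i*N+r, j*N+c) * v (j*N+c))"
    by (simp add: sum_blocks)
  also have "\<dots> = (\<Sum>i<l. \<Sum>r<N. \<Sum>j<l. \<Sum>c<N.
       if j = i then cnj (v (i*N+r)) * C i $$ (r,c) * v (i*N+c) else 0)"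
    by (intro sum.cong refl) (auto simp: bd_entry)
  also have "\<dots> = (\<Sum>i<l. \<Sum>r<N. \<Sum>c<N. cnj (v (i*N+r)) * C i $$ (r,c) * v (i*N+c))"
    by (simp add: sum_if_const)
  also have "\<dots> \<ge> 0"
  proof (rule sum_nonneg)
    fix i assume "i \<in> {..<l}"
    then show "0 \<le> (\<Sum>r<N. \<Sum>c<N. cnj (v (i*N+r)) * C i $$ (r,c) * v (i*N+c))"
      using assms psd_quad[of N "C i" "\<lambda>r. v (i*N+r)"] by simp
  qed
  finally show "0 \<le> (\<Sum>p<l*N. \<Sum>q<l*N. cnj (v p) * block_diag l N C $$ (p,q) * v q)" .
qed

lemma trace_bd:
  assumes "\<forall>i<l. C i \<in> carrier_mat N N"
  shows "mtrace (block_diag l N C) = (\<Sum>i<l. mtrace (C i))"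
proof -
  have "mtrace (block_diag l N C) = (\<Sum>i<l. mtrace (block N (block_diag l N C) i i))"
    by (rule trace_sum) (simp add: block_diag_def)
  also have "\<dots> = (\<Sum>i<l. mtrace (C i))"
    using assms by (intro sum.cong refl) (simp add: block_of_bd)
  finally show ?thesis .
qed

lemma psd_smult:
  assumes "psd n A" "a \<ge> 0"
  shows "psd n (a \<cdot>\<^sub>m A)"
  unfolding psd_def
proof (intro conjI allI)
  show "a \<cdot>\<^sub>m A \<in> carrier_mat n n" using assms by (simp add: psd_def)
  fix v :: "nat \<Rightarrow> complex"
  have c: "A \<in> carrier_mat n n" using assms by (simp add: psd_def)
  have "(\<Sum>i<n. \<Sum>j<n. cnj (v i) * (a \<cdot>\<^sub>m A) $$ (i,j) * v j) =
     a * (\<Sum>i<n. \<Sum>j<n. cnj (v i) * A $$ (i,j) * v j)"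
    using c by (simp add: sum_distrib_left algebra_simps)
  also have "\<dots> \<ge> 0" using assms by (intro mult_nonneg_nonneg) (auto simp: psd_quad)
  finally show "0 \<le> (\<Sum>i<n. \<Sum>j<n. cnj (v i) * (a \<cdot>\<^sub>m A) $$ (i,j) * v j)" .
qed

lemma trace_smult: "A \<in> carrier_mat n n \<Longrightarrow> mtrace (a \<cdot>\<^sub>m A) = a * mtrace A"
  unfolding mtrace_def sum_distrib_left by (intro sum.cong) auto


lemma psd_trace0:
  assumes A: "psd n A" and t: "mtrace A = 0" and ij: "i < n" "j < n"
  shows "A $$ (i,j) = 0"
proof -
  have c: "dim_row A = n" using A by (auto simp: psd_def)
  have d: "\<forall>r\<in>{..<n}. A $$ (r,r) = 0"
    using t c psd_diag[OF A] sum_nonneg_eq_0_iff[of "{..<n}" "\<lambda>r. A $$ (r,r)"]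
    by (simp add: mtrace_def)
  show ?thesis using psd_offdiag_zero[OF A ij] d ij by simp
qed

lemma block_diag_cong:
  assumes "\<And>i x y. i < l \<Longrightarrow> x < k \<Longrightarrow> y < k \<Longrightarrow> C i $$ (x,y) = D i $$ (x,y)"
  shows "block_diag l k C = block_diag l k D"
proof (rule eq_matI)
  fix r c assume "r < dim_row (block_diag l k D)" "c < dim_col (block_diag l k D)"
  hence r: "r < l*k" and c: "c < l*k" by (auto simp: block_diag_def)
  have "r div k < l" using r by (metis less_mult_imp_div_less mult.commute)
  moreover have "k > 0" using r by (cases k) auto
  ultimately show "block_diag l k C $$ (r,c) = block_diag l k D $$ (r,c)"
    using r c assms by (simp add: block_diag_def)
qed (auto simp: block_diag_def)

lemma tensor_pinch:
  "tensor_map l l N k (pinching l) Psi X = block_diag l k (\<lambda>i. Psi (block N X i i))"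
proof (rule eq_matI)
  fix r c assume r: "r < dim_row (block_diag l k (\<lambda>i. Psi (block N X i i)))"
    and c: "c < dim_col (block_diag l k (\<lambda>i. Psi (block N X i i)))"
  hence r': "r < l*k" and c': "c < l*k" by (auto simp: block_diag_def)
  have a: "r div k < l" and b: "c div k < l" using r' c'
    by (metis less_mult_imp_div_less mult.commute)+
  have pe: "\<And>i j. i < l \<Longrightarrow> j < l \<Longrightarrow> pinching l (munit l i j) $$ (r div k, c div k) =
     (if r div k = c div k then (if i = r div k then (if j = r div k then 1 else 0) else 0) else 0)"
    using a b by (auto simp: pinching_def munit_def)
  show "tensor_map l l N k (pinching l) Psi X $$ (r, c) =
         block_diag l k (\<lambda>i. Psi (block N X i i)) $$ (r, c)"
  proof -
    let ?P = "\<lambda>i j. Psi (block N X i j) $$ (r mod k, c mod k)"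
    have "(\<Sum>i<l. \<Sum>j<l. pinching l (munit l i j) $$ (r div k, c div k) * ?P i j)
       = (\<Sum>i<l. \<Sum>j<l. (if r div k = c div k then (if i = r div k then (if j = r div k then 1 else 0) else 0) else 0) * ?P i j)"
      by (intro sum.cong refl) (simp add: pe)
    also have "\<dots> = (if r div k = c div k then ?P (r div k) (r div k) else 0)"
      using a by (simp add: sum_if_const if_distrib[of "\<lambda>x. x * _"] cong: if_cong)
    finally show ?thesis using r' c' a b by (simp add: tensor_map_def block_diag_def)
  qed
qed (auto simp: tensor_map_def block_diag_def)


theorem proposition8p3:
  fixes l N k :: nat and Psi :: "complex mat \<Rightarrow> complex mat"
  assumes "quantum_channel N k Psi"
  shows "tensor_map l l N k (pinching l) Psi ` density_mats (l*N) =
    {block_diag l k (\<lambda>i. complex_of_real (a i) \<cdot>\<^sub>m B i) | a B.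
       a \<in> simplex l \<and> (\<forall>i<l. B i \<in> Psi ` density_mats N)}"
proof -
  have lin1: "\<And>X. X \<in> carrier_mat N N \<Longrightarrow> Psi X \<in> carrier_mat k k"
    and lin3: "\<And>X c. X \<in> carrier_mat N N \<Longrightarrow> Psi (c \<cdot>\<^sub>m X) = c \<cdot>\<^sub>m Psi X"
    using assms by (auto simp: quantum_channel_def linear_mat_map_def)
  have bc: "\<And>X i. block N X i i \<in> carrier_mat N N" by (simp add: block_def)
  show ?thesis
  proof (intro equalityI subsetI)
    fix Z assume "Z \<in> tensor_map l l N k (pinching l) Psi ` density_mats (l*N)"
    then obtain X where X: "X \<in> density_mats (l*N)" and Z: "Z = tensor_map l l N k (pinching l) Psi X"
      by blast
    have Xp: "psd (l*N) X" and Xt: "mtrace X = 1" using X by (auto simp: density_mats_def)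
    have Xc: "X \<in> carrier_mat (l*N) (l*N)" using Xp by (simp add: psd_def)
    define t where "t i = mtrace (block N X i i)" for i
    have tnn: "t i \<ge> 0" if "i < l" for i
    proof -
      have "t i = (\<Sum>r<N. block N X i i $$ (r,r))" by (simp add: t_def mtrace_def block_def)
      also have "\<dots> \<ge> 0" using psd_diag[OF psd_block[OF Xp that]] by (intro sum_nonneg) simp
      finally show ?thesis .
    qed
    define a where "a i = Re (t i)" for i
    have ta: "t i = complex_of_real (a i)" if "i < l" for i
      using tnn[OF that] by (simp add: a_def complex_eq_iff less_eq_complex_def)
    have ann: "a i \<ge> 0" if "i < l" for i
      using tnn[OF that] by (simp add: a_def less_eq_complex_def)
    have "(\<Sum>i<l. t i) = 1" using Xt trace_sum[OF Xc] by (simp add: t_def)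
    hence asum: "(\<Sum>i<l. a i) = 1" by (simp add: a_def flip: Re_sum)
    have as: "a \<in> simplex l" using ann asum by (simp add: simplex_def)
    obtain j0 where j0: "j0 < l" "a j0 > 0"
    proof (rule ccontr)
      assume "\<not> thesis"
      with that have "\<forall>i<l. a i = 0" using ann by (meson linorder_neqE_linordered_idom not_le)
      hence "(\<Sum>i<l. a i) = 0" by simp
      with asum show False by simp
    qed
    have dens: "complex_of_real (1 / a i) \<cdot>\<^sub>m block N X i i \<in> density_mats N"
      if "i < l" "a i > 0" for i
    proof -
      have "psd N (complex_of_real (1 / a i) \<cdot>\<^sub>m block N X i i)"
        using that by (intro psd_smult psd_block[OF Xp]) (auto simp: less_eq_complex_def)
      moreover have "mtrace (complex_of_real (1 / a i) \<cdot>\<^sub>m block N X i i) = 1"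
        using that ta[OF that(1)] by (simp add: trace_smult[OF bc] t_def[symmetric])
      ultimately show ?thesis by (simp add: density_mats_def)
    qed
    define i' where "i' i = (if a i > 0 then i else j0)" for i
    define B where "B i = Psi (complex_of_real (1 / a (i' i)) \<cdot>\<^sub>m block N X (i' i) (i' i))" for i
    have Bin: "\<forall>i<l. B i \<in> Psi ` density_mats N"
      using dens j0 by (auto simp: B_def i'_def)
    have Bc: "B i \<in> carrier_mat k k" for i
      unfolding B_def by (rule lin1) (simp add: block_def)
    have "Z = block_diag l k (\<lambda>i. Psi (block N X i i))" using Z by (simp add: tensor_pinch)
    also have "\<dots> = block_diag l k (\<lambda>i. complex_of_real (a i) \<cdot>\<^sub>m B i)"
    proof (rule block_diag_cong)
      fix i x y assume i: "i < l" and xy: "x < k" "y < k"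
      show "Psi (block N X i i) $$ (x, y) = (complex_of_real (a i) \<cdot>\<^sub>m B i) $$ (x, y)"
      proof (cases "a i > 0")
        case True
        have "B i = complex_of_real (1 / a i) \<cdot>\<^sub>m Psi (block N X i i)"
          using True by (simp add: B_def i'_def lin3[OF bc])
        then show ?thesis using True xy lin1[OF bc, of X i] by simp
      next
        case False
        hence a0: "a i = 0" using ann[OF i] by simp
        have "block N X i i = 0 \<cdot>\<^sub>m block N X i i"
        proof (rule eq_matI)
          fix r c assume "r < dim_row (0 \<cdot>\<^sub>m block N X i i)" "c < dim_col (0 \<cdot>\<^sub>m block N X i i)"
          hence rc: "r < N" "c < N" by (auto simp: block_def)
          have "t i = 0" using ta[OF i] a0 by simp
          then show "block N X i i $$ (r, c) = (0 \<cdot>\<^sub>m block N X i i) $$ (r, c)"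
            using psd_trace0[OF psd_block[OF Xp i] _ rc] rc by (simp add: t_def block_def)
        qed auto
        hence "Psi (block N X i i) = 0 \<cdot>\<^sub>m Psi (block N X i i)"
          by (metis lin3[OF bc])
        then have "Psi (block N X i i) $$ (x, y) = 0"
          using xy lin1[OF bc, of X i] by (metis carrier_matD index_smult_mat(1) mult_zero_left)
        then show ?thesis using a0 xy Bc[of i] by simp
      qed
    qed
    finally show "Z \<in> {block_diag l k (\<lambda>i. complex_of_real (a i) \<cdot>\<^sub>m B i) | a B.
       a \<in> simplex l \<and> (\<forall>i<l. B i \<in> Psi ` density_mats N)}"
      using as Bin by blast
  next
    fix Z assume "Z \<in> {block_diag l k (\<lambda>i. complex_of_real (a i) \<cdot>\<^sub>m B i) | a B.
       a \<in> simplex l \<and> (\<forall>i<l. B i \<in> Psi ` density_mats N)}"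
    then obtain a B where Z: "Z = block_diag l k (\<lambda>i. complex_of_real (a i) \<cdot>\<^sub>m B i)"
      and as: "a \<in> simplex l" and Bin: "\<forall>i<l. B i \<in> Psi ` density_mats N" by blast
    have "\<forall>i. \<exists>Y. i < l \<longrightarrow> Y \<in> density_mats N \<and> B i = Psi Y" using Bin by blast
    then obtain Y where Y: "\<And>i. i < l \<Longrightarrow> Y i \<in> density_mats N \<and> B i = Psi (Y i)" by metis
    have Yp: "\<And>i. i < l \<Longrightarrow> psd N (Y i)" and Yt: "\<And>i. i < l \<Longrightarrow> mtrace (Y i) = 1"
      using Y by (auto simp: density_mats_def)
    have Yc: "\<And>i. i < l \<Longrightarrow> Y i \<in> carrier_mat N N" using Yp by (simp add: psd_def)
    have ann: "\<And>i. i < l \<Longrightarrow> a i \<ge> 0" and asum: "(\<Sum>i<l. a i) = 1"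
      using as by (auto simp: simplex_def)
    define C where "C i = complex_of_real (a i) \<cdot>\<^sub>m Y i" for i
    define X where "X = block_diag l N C"
    have Cc: "\<forall>i<l. C i \<in> carrier_mat N N" using Yc by (simp add: C_def)
    have "psd (l*N) X" unfolding X_def
      by (rule psd_bd) (auto simp: C_def less_eq_complex_def intro!: psd_smult Yp ann)
    moreover have "mtrace X = 1"
    proof -
      have "mtrace X = (\<Sum>i<l. mtrace (C i))" unfolding X_def by (rule trace_bd[OF Cc])
      also have "\<dots> = (\<Sum>i<l. complex_of_real (a i))"
        by (intro sum.cong refl) (simp add: C_def trace_smult[OF Yc] Yt)
      also have "\<dots> = 1" using asum by (metis of_real_1 of_real_sum)
      finally show ?thesis .
    qed
    ultimately have Xd: "X \<in> density_mats (l*N)" by (simp add: density_mats_def)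
    have "tensor_map l l N k (pinching l) Psi X = block_diag l k (\<lambda>i. Psi (block N X i i))"
      by (simp add: tensor_pinch)
    also have "\<dots> = Z" unfolding Z
    proof (rule block_diag_cong)
      fix i x y assume i: "i < l" and xy: "x < k" "y < k"
      have "block N X i i = C i" unfolding X_def using i Cc by (simp add: block_of_bd)
      then have "Psi (block N X i i) = complex_of_real (a i) \<cdot>\<^sub>m B i"
        using i Y[OF i] by (simp add: C_def lin3[OF Yc[OF i]])
      then show "Psi (block N X i i) $$ (x, y) = (complex_of_real (a i) \<cdot>\<^sub>m B i) $$ (x, y)" by simp
    qed
    finally show "Z \<in> tensor_map l l N k (pinching l) Psi ` density_mats (l*N)"
      using Xd by blast
  qed
qed

end
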